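(* There exist absolute constants $c>0$ and $n_0$ such that the following holds for every $n\ge n_0$ that is a power of $2$. Let $L=\log_2 n$ and let $T_1,\dots,T_n$ be drawn independently and uniformly at random from the $L$-element subsets of $[n]$. For $x\in\{0,1\}^n$ let $N_T(x) := \#\{ i\in[n] : x_j = 1 \text{ for all } j\in T_i\}$. Then $\mathbb{E}_{T_1,\dots,T_n}\Big[\Pr_{\mathbf{x}\sim\{0,1\}^n}[N_T(\mathbf{x}) = 1]\Big] \ge c$, where $\mathbf{x}$ is uniform on $\{0,1\}^n$. In particular, there exists a choice of $T_1,\dots,T_n$ with $\Pr_{\mathbf{x}}[N_T(\mathbf{x})=1]\ge c$. *)

theory Defs
  imports Complex_Main "HOL-Library.FuncSet"
begin

text \<open>Index set [n] is rendered as {0..<n}. A point x of {0,1}^n is a function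
  {0..<n} \<rightarrow> bool (extensional), with x j = True meaning x_j = 1.\<close>

definition cube :: "nat \<Rightarrow> (nat \<Rightarrow> bool) set" where
  "cube n = {0..<n} \<rightarrow>\<^sub>E (UNIV :: bool set)"

definition subsets_card :: "nat \<Rightarrow> nat \<Rightarrow> nat set set" where
  "subsets_card n L = {S. S \<subseteq> {0..<n} \<and> card S = L}"

definition set_tuples :: "nat \<Rightarrow> nat \<Rightarrow> (nat \<Rightarrow> nat set) set" where
  "set_tuples n L = {0..<n} \<rightarrow>\<^sub>E subsets_card n L"

definition N_T :: "nat \<Rightarrow> (nat \<Rightarrow> nat set) \<Rightarrow> (nat \<Rightarrow> bool) \<Rightarrow> nat" where
  "N_T n T x = card {i \<in> {0..<n}. \<forall>j \<in> T i. x j}"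

definition prob_unique :: "nat \<Rightarrow> (nat \<Rightarrow> nat set) \<Rightarrow> real" where
  "prob_unique n T = real (card {x \<in> cube n. N_T n T x = 1}) / real (card (cube n))"

definition expected_prob_unique :: "nat \<Rightarrow> nat \<Rightarrow> real" where
  "expected_prob_unique n L =
     (\<Sum>T \<in> set_tuples n L. prob_unique n T) / real (card (set_tuples n L))"

end

theory Submission
  imports Defs
begin


lemma count_exactly_one:
  assumes fI: "finite I" and GS: "G \<subseteq> S" and fS: "finite S"
  shows "card {T \<in> (I \<rightarrow>\<^sub>E S). card {i\<in>I. T i \<in> G} = 1}
         = card I * card G * (card S - card G) ^ (card I - 1)"
proof -
  define F where "F i = PiE I (\<lambda>j. if j = i then G else S - G)" for i
  have eq: "{T \<in> (I \<rightarrow>\<^sub>E S). card {i\<in>I. T i \<in> G} = 1} = (\<Union>i\<in>I. F i)"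
  proof (intro equalityI subsetI)
    fix T assume "T \<in> {T \<in> (I \<rightarrow>\<^sub>E S). card {i\<in>I. T i \<in> G} = 1}"
    then have T: "T \<in> (I \<rightarrow>\<^sub>E S)" and c: "card {i\<in>I. T i \<in> G} = 1" by auto
    from c obtain i0 where i0: "{i\<in>I. T i \<in> G} = {i0}" by (auto simp: card_Suc_eq)
    then have "i0 \<in> I" by auto
    moreover have "T \<in> F i0" using T i0 unfolding F_def by (auto simp: PiE_iff)
    ultimately show "T \<in> (\<Union>i\<in>I. F i)" by blast
  next
    fix T assume "T \<in> (\<Union>i\<in>I. F i)"
    then obtain i where i: "i \<in> I" "T \<in> F i" by blast
    then have "{j\<in>I. T j \<in> G} = {i}" unfolding F_def by (auto simp: PiE_iff split: if_splits)
    moreover have "T \<in> (I \<rightarrow>\<^sub>E S)" using i GS unfolding F_def by (auto simp: PiE_iff split: if_splits)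
    ultimately show "T \<in> {T \<in> (I \<rightarrow>\<^sub>E S). card {i\<in>I. T i \<in> G} = 1}" by simp
  qed
  have fG: "finite G" using GS fS finite_subset by blast
  have cF: "card (F i) = card G * (card S - card G) ^ (card I - 1)" if "i \<in> I" for i
  proof -
    have "card (F i) = (\<Prod>j\<in>I. card (if j = i then G else S - G))"
      unfolding F_def using fI by (simp add: card_PiE)
    also have "\<dots> = card G * (\<Prod>j\<in>I - {i}. card (if j = i then G else S - G))"
      using fI that by (simp add: prod.remove)
    also have "(\<Prod>j\<in>I - {i}. card (if j = i then G else S - G)) = (\<Prod>j\<in>I - {i}. card (S - G))"
      by (rule prod.cong) auto
    also have "\<dots> = (card S - card G) ^ (card I - 1)"
      using fI that GS fG by (simp add: card_Diff_subset)
    finally show ?thesis .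
  qed
  have "card (\<Union>i\<in>I. F i) = (\<Sum>i\<in>I. card (F i))"
  proof (rule card_UN_disjoint[OF fI])
    show "\<forall>i\<in>I. finite (F i)" unfolding F_def using fI fS fG
      by (auto intro!: finite_PiE)
    show "\<forall>i\<in>I. \<forall>j\<in>I. i \<noteq> j \<longrightarrow> F i \<inter> F j = {}"
      unfolding F_def by (auto simp: PiE_iff) (metis Diff_iff)
  qed
  also have "\<dots> = (\<Sum>i\<in>I. card G * (card S - card G) ^ (card I - 1))"
    using cF by simp
  finally show ?thesis using eq by simp
qed

lemma sum_card_swap:
  assumes "finite A" "finite B"
  shows "(\<Sum>a\<in>A. card {b\<in>B. P a b}) = (\<Sum>b\<in>B. card {a\<in>A. P a b})"
proof -
  have "(\<Sum>a\<in>A. card {b\<in>B. P a b}) = (\<Sum>a\<in>A. \<Sum>b\<in>B. if P a b then 1 else 0)"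
    using assms by (simp add: sum.inter_filter[symmetric])
  also have "\<dots> = (\<Sum>b\<in>B. \<Sum>a\<in>A. if P a b then 1 else 0)" by (rule sum.swap)
  also have "\<dots> = (\<Sum>b\<in>B. card {a\<in>A. P a b})"
    using assms by (simp add: sum.inter_filter[symmetric])
  finally show ?thesis .
qed

lemma card_subsets_pred:
  assumes "finite I"
  shows "card {W. W \<subseteq> I \<and> P (card W)} = (\<Sum>w\<in>{w. w \<le> card I \<and> P w}. card I choose w)"
proof -
  have eq: "{W. W \<subseteq> I \<and> P (card W)} = (\<Union>w\<in>{w. w \<le> card I \<and> P w}. {W. W \<subseteq> I \<and> card W = w})"
    using assms by (auto intro: card_mono)
  have "card (\<Union>w\<in>{w. w \<le> card I \<and> P w}. {W. W \<subseteq> I \<and> card W = w})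
        = (\<Sum>w\<in>{w. w \<le> card I \<and> P w}. card {W. W \<subseteq> I \<and> card W = w})"
    by (rule card_UN_disjoint) (use assms in auto)
  then show ?thesis using eq assms by (simp add: n_subsets)
qed



lemma choose_sq_sum_real:
  "(\<Sum>i\<le>n. real i ^ 2 * real (n choose i)) = real n * (real n + 1) * 2 ^ n / 4"
proof (cases n)
  case 0 then show ?thesis by simp
next
  case (Suc a)
  have lin: "(\<Sum>i\<le>a. real i * real (a choose i)) = real a * 2 ^ (a - 1)"
    using arg_cong[OF choose_linear_sum[of a], of real] by simp
  have row: "(\<Sum>i\<le>a. real (a choose i)) = 2 ^ a"
    using arg_cong[OF choose_row_sum[of a], of real] by simp
  have "(\<Sum>i\<le>Suc a. real i ^ 2 * real (Suc a choose i))
      = (\<Sum>i\<le>a. real (Suc i) ^ 2 * real (Suc a choose Suc i))"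
    by (simp only: sum.atMost_Suc_shift) simp
  also have "\<dots> = (\<Sum>i\<le>a. real (Suc i) * real (Suc a) * real (a choose i))"
  proof (rule sum.cong[OF refl])
    fix i
    have "Suc i * (Suc a choose Suc i) = Suc a * (a choose i)"
      using Suc_times_binomial_eq[of a i] by simp
    then have "real (Suc i) * real (Suc a choose Suc i) = real (Suc a) * real (a choose i)"
      by (metis of_nat_mult)
    then have e: "real (Suc i) * real (Suc a choose Suc i) = real (Suc a) * real (a choose i)" .
    have "real (Suc i) ^ 2 * real (Suc a choose Suc i) = real (Suc i) * (real (Suc i) * real (Suc a choose Suc i))"
      by (simp only: power2_eq_square mult.assoc)
    also have "\<dots> = real (Suc i) * (real (Suc a) * real (a choose i))" by (simp only: e)
    finally show "real (Suc i) ^ 2 * real (Suc a choose Suc i) = real (Suc i) * real (Suc a) * real (a choose i)"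
      by (simp only: mult.assoc)
  qed
  also have "\<dots> = real (Suc a) * ((\<Sum>i\<le>a. real i * real (a choose i)) + (\<Sum>i\<le>a. real (a choose i)))"
    by (simp add: sum_distrib_left sum.distrib algebra_simps)
  also have "\<dots> = real (Suc a) * (real a * 2 ^ (a - 1) + 2 ^ a)" using lin row by simp
  also have "\<dots> = real (Suc a) * (real (Suc a) + 1) * 2 ^ (Suc a) / 4"
  proof (cases a)
    case 0 then show ?thesis by simp
  next
    case (Suc b) then show ?thesis by (simp add: algebra_simps)
  qed
  finally show ?thesis using Suc by simp
qed

lemma choose_lin_sum_real:
  "(\<Sum>i\<le>n. real i * real (n choose i)) = real n * 2 ^ n / 2"
proof -
  have "(\<Sum>i\<le>n. real i * real (n choose i)) = real n * 2 ^ (n - 1)"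
    using arg_cong[OF choose_linear_sum[of n], of real] by simp
  then show ?thesis by (cases n) auto
qed

lemma second_moment:
  "(\<Sum>i\<le>2*m. (real i - real m) ^ 2 * real ((2*m) choose i)) = real m * 2 ^ (2*m) / 2"
proof -
  have row: "(\<Sum>i\<le>2*m. real ((2*m) choose i)) = 2 ^ (2*m)"
    using arg_cong[OF choose_row_sum[of "2*m"], of real] by simp
  have "(\<Sum>i\<le>2*m. (real i - real m) ^ 2 * real ((2*m) choose i))
     = (\<Sum>i\<le>2*m. real i ^ 2 * real ((2*m) choose i)) - 2 * real m * (\<Sum>i\<le>2*m. real i * real ((2*m) choose i))
        + real m ^ 2 * (\<Sum>i\<le>2*m. real ((2*m) choose i))"
    by (simp add: power2_eq_square algebra_simps sum.distrib sum_subtractf sum_distrib_left)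
  also have "\<dots> = real m * 2 ^ (2*m) / 2"
    unfolding choose_sq_sum_real choose_lin_sum_real row by (simp add: algebra_simps power2_eq_square)
  finally show ?thesis .
qed

lemma upper_half:
  "2 ^ (2*m) \<le> 2 * (\<Sum>i\<in>{m..2*m}. real ((2*m) choose i))"
proof -
  let ?n = "2*m"
  have row: "(\<Sum>i\<le>?n. real (?n choose i)) = 2 ^ ?n"
    using arg_cong[OF choose_row_sum[of "?n"], of real] by simp
  have split: "{..?n} = {..<m} \<union> {m..?n}" by auto
  have "(\<Sum>i\<le>?n. real (?n choose i)) = (\<Sum>i<m. real (?n choose i)) + (\<Sum>i\<in>{m..?n}. real (?n choose i))"
    unfolding split by (rule sum.union_disjoint) auto
  moreover have "(\<Sum>i<m. real (?n choose i)) \<le> (\<Sum>i\<in>{m..?n}. real (?n choose i))"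
  proof -
    have "(\<Sum>i<m. real (?n choose i)) = (\<Sum>i<m. real (?n choose (?n - i)))"
      by (rule sum.cong) (auto simp: binomial_symmetric[symmetric])
    also have "\<dots> = (\<Sum>j\<in>(\<lambda>i. ?n - i) ` {..<m}. real (?n choose j))"
      by (rule sum.reindex[symmetric, unfolded comp_def]) (auto simp: inj_on_def)
    also have "\<dots> \<le> (\<Sum>i\<in>{m..?n}. real (?n choose i))"
      by (rule sum_mono2) auto
    finally show ?thesis .
  qed
  ultimately show ?thesis using row by linarith
qed

lemma tail_bound:
  assumes "0 < t"
  shows "(\<Sum>i\<in>{i. real m + t \<le> real i \<and> i \<le> 2*m}. real ((2*m) choose i)) * t ^ 2 \<le> real m * 2 ^ (2*m) / 2"
proof -
  have "(\<Sum>i\<in>{i. real m + t \<le> real i \<and> i \<le> 2*m}. real ((2*m) choose i)) * t ^ 2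
      = (\<Sum>i\<in>{i. real m + t \<le> real i \<and> i \<le> 2*m}. t ^ 2 * real ((2*m) choose i))"
    by (subst mult.commute) (rule sum_distrib_left)
  also have "\<dots> \<le> (\<Sum>i\<in>{i. real m + t \<le> real i \<and> i \<le> 2*m}. (real i - real m) ^ 2 * real ((2*m) choose i))"
  proof (rule sum_mono)
    fix i assume "i \<in> {i. real m + t \<le> real i \<and> i \<le> 2*m}"
    then have "t \<le> real i - real m" by auto
    then have "t^2 \<le> (real i - real m)^2" using assms by (intro power_mono) auto
    then show "t ^ 2 * real ((2*m) choose i) \<le> (real i - real m) ^ 2 * real ((2*m) choose i)"
      by (intro mult_right_mono) auto
  qed
  also have "\<dots> \<le> (\<Sum>i\<le>2*m. (real i - real m) ^ 2 * real ((2*m) choose i))"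
    by (rule sum_mono2) auto
  finally show ?thesis using second_moment by simp
qed



lemma binom_ratio:
  assumes "k \<le> n"
  shows "real (w choose k) / real (n choose k) = (\<Prod>i<k. (real w - real i) / (real n - real i))"
proof -
  have g: "real (a choose k) = (\<Prod>i<k. real a - real i) / fact k" for a
    by (simp add: binomial_gbinomial gbinomial_prod_rev atLeast0LessThan)
  have "(\<Prod>i<k. (real w - real i) / (real n - real i)) = (\<Prod>i<k. real w - real i) / (\<Prod>i<k. real n - real i)"
    by (rule prod_dividef)
  then show ?thesis unfolding g by (simp add: fact_nonzero)
qed

lemma four_sq_le_pow: "10 \<le> k \<Longrightarrow> 4 * k^2 \<le> (2::nat) ^ k"
proof (induction k rule: dec_induct)
  case base then show ?case by simp
next
  case (step k)
  have h: "10 * (4*k) \<le> k * (4*k)" by (rule mult_le_mono1[OF step(1)])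
  have e: "4 * (Suc k)^2 = 4*(k*k) + 8*k + 4" by (simp add: power2_eq_square algebra_simps)
  have e2: "2 * (4 * k^2) = 8*(k*k)" by (simp add: power2_eq_square)
  have "k * (4*k) = 4*(k*k)" by simp
  then have "4 * (Suc k)^2 \<le> 2 * (4 * k^2)" unfolding e e2 using h step(1) by linarith
  also have "\<dots> \<le> 2 * 2^k" using step(3) by simp
  finally show ?case by simp
qed

lemma one_plus_inv_pow: "k > 0 \<Longrightarrow> (1 + 1 / real k) ^ k \<le> 3"
proof -
  assume k: "k > 0"
  have "(1 + 1 / real k) ^ k \<le> exp (1 / real k) ^ k"
  proof (rule power_mono)
    show "1 + 1 / real k \<le> exp (1 / real k)" using exp_ge_add_one_self[of "1/real k"] by linarith
  qed simp
  also have "\<dots> = exp (real k * (1 / real k))" by (simp only: exp_of_nat_mult)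
  also have "\<dots> = exp 1" using k by simp
  also have "\<dots> \<le> 3" by (rule exp_le)
  finally show ?thesis .
qed

lemma p_bounds:
  fixes k w :: nat
  assumes k: "10 \<le> k" and wm: "2 ^ (k - 1) \<le> w"
    and wu: "real w \<le> real (2 ^ (k - 1)) + real (2 ^ (k - 1)) / real k"
  shows "1/2 \<le> real (2^k) * (real (w choose k) / real (2^k choose k))"
    and "real (2^k) * (real (w choose k) / real (2^k choose k)) \<le> 3"
proof -
  define m :: real where "m = real (2 ^ (k - 1))"
  have n2: "real ((2::nat)^k) = 2 * m" unfolding m_def using k
    by (metis Suc_diff_1 gr0I not_numeral_le_zero of_nat_mult of_nat_numeral power_Suc zero_le)
  have kle: "4 * real k ^ 2 \<le> 2 * m" using four_sq_le_pow[OF k] n2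
    by (metis of_nat_le_iff of_nat_mult of_nat_numeral of_nat_power)
  have kpos: "real k \<ge> 10" using k by simp
  have h2: "real k * 1 \<le> real k * real k" by (rule mult_left_mono) (use kpos in auto)
  have km: "real k \<le> m" using h2 kle kpos unfolding power2_eq_square mult_1_right by linarith
  have mpos: "m > 0" unfolding m_def by simp
  have "real k \<le> real ((2::nat)^k)" using km n2 mpos by linarith
  then have kn: "k \<le> 2^k" by (simp only: of_nat_le_iff)
  have ratio: "real (w choose k) / real (2^k choose k) = (\<Prod>i<k. (real w - real i) / (2*m - real i))"
    using binom_ratio[OF kn, of w] n2 by simp
  have wmr: "m \<le> real w" using wm unfolding m_def by simp
  have wur: "real w \<le> m + m / real k" using wu unfolding m_def by simp
  have "(\<Prod>i<k. (real w - real i) / (2*m - real i)) \<le> (\<Prod>i<k. real w / (2*m))"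
  proof (rule prod_mono)
    fix i assume i: "i \<in> {..<k}"
    then have ik: "real i < real k" by simp
    have d: "2*m - real i > 0" using ik km by linarith
    have "m / real k \<le> m" using mpos kpos by (simp add: divide_le_eq)
    then have wn: "real w \<le> 2*m" using wur by linarith
    have "real w * real i \<le> 2*m * real i" using wn by (intro mult_right_mono) auto
    then have "(real w - real i) * (2*m) \<le> real w * (2*m - real i)"
      by (simp add: algebra_simps)
    then have le: "(real w - real i) / (2*m - real i) \<le> real w / (2*m)"
      using d mpos by (simp add: divide_simps)
    have "0 \<le> (real w - real i) / (2*m - real i)" using d ik km wmr by simp
    then show "0 \<le> (real w - real i) / (2*m - real i) \<and> (real w - real i) / (2*m - real i) \<le> real w / (2*m)"
      using le by simp
  qed
  also have "\<dots> = (real w / (2*m)) ^ k" by simp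
  also have "\<dots> \<le> ((1 + 1/real k) / 2) ^ k"
  proof (rule power_mono)
    have "real w / (2*m) \<le> (m + m / real k) / (2*m)" using wur mpos by (simp add: divide_right_mono)
    also have "\<dots> = (1 + 1/real k) / 2" using mpos by (simp add: field_simps)
    finally show "real w / (2*m) \<le> (1 + 1/real k) / 2" .
  qed (use mpos in simp)
  also have "\<dots> = (1 + 1/real k) ^ k / 2 ^ k" by (simp add: power_divide)
  also have "\<dots> \<le> 3 / 2 ^ k" using one_plus_inv_pow[of k] k by (simp add: divide_right_mono)
  finally have up: "real (w choose k) / real (2^k choose k) \<le> 3 / 2^k" using ratio by simp
  show "real (2^k) * (real (w choose k) / real (2^k choose k)) \<le> 3"
    using up by (simp add: field_simps)
  have "((m - real k) / (2*m)) ^ k = (\<Prod>i<k. (m - real k) / (2*m))" by simp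
  also have "\<dots> \<le> (\<Prod>i<k. (real w - real i) / (2*m - real i))"
  proof (rule prod_mono)
    fix i assume i: "i \<in> {..<k}"
    then have ik: "real i < real k" by simp
    have d: "2*m - real i > 0" using ik km by linarith
    have a: "0 \<le> m - real k" using km by simp
    have "(m - real k) / (2*m) \<le> (m - real k) / (2*m - real i)"
      using a d by (intro divide_left_mono) (auto intro: mult_pos_pos)
    also have "\<dots> \<le> (real w - real i) / (2*m - real i)"
      using d wmr ik by (intro divide_right_mono) auto
    finally show "0 \<le> (m - real k) / (2*m) \<and> (m - real k) / (2*m) \<le> (real w - real i) / (2*m - real i)"
      using a mpos by simp
  qed
  finally have lo1: "((m - real k) / (2*m)) ^ k \<le> real (w choose k) / real (2^k choose k)" using ratio by simp
  have eqb: "(m - real k) / (2*m) = (1 + (- real k / m)) / 2" using mpos by (simp add: field_simps)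
  have "((m - real k) / (2*m)) ^ k = (1 + (- real k / m)) ^ k / 2 ^ k" unfolding eqb by (rule power_divide)
  moreover have bern: "1 + real k * (- real k / m) \<le> (1 + (- real k / m)) ^ k"
    using km mpos by (intro Bernoulli_inequality) simp
  moreover have kk: "real k * (real k / m) \<le> 1/2"
    using kle mpos by (simp add: field_simps power2_eq_square)
  moreover have "1 + real k * (- real k / m) = 1 - real k * (real k / m)" by simp
  ultimately have b: "1/2 \<le> (1 + (- real k / m)) ^ k" by linarith
  have "1/2 / 2^k \<le> (1 + (- real k / m)) ^ k / 2^k" using b by (rule divide_right_mono) simp
  then have "1/2 / 2^k \<le> ((m - real k) / (2*m)) ^ k" unfolding eqb power_divide .
  with lo1 have "1/2 / 2^k \<le> real (w choose k) / real (2^k choose k)" by linarith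
  then show "1/2 \<le> real (2^k) * (real (w choose k) / real (2^k choose k))"
    by (simp add: field_simps)
qed

lemma f_bound:
  fixes A B :: real and q :: nat
  assumes B: "B > 0" and A: "0 \<le> A" "A \<le> B" and q: "q \<ge> 1"
    and lo: "1/2 \<le> real (4*q) * (A / B)" and hi: "real (4*q) * (A / B) \<le> 3"
  shows "B ^ (4*q) / 512 \<le> real (4*q) * A * (B - A) ^ (4*q - 1)"
proof -
  define p where "p = A / B"
  have p0: "0 \<le> p" and p1: "p \<le> 1" using A B unfolding p_def by auto
  have Ap: "A = p * B" and BA: "B - A = B * (1 - p)" using B unfolding p_def by (auto simp: field_simps)
  have "real (4*q) * (A / B) = 4 * (real q * p)" unfolding p_def by simp
  then have qp: "real q * p \<le> 3/4" using hi by linarith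
  have "1 - real q * p \<le> (1 - p) ^ q" using Bernoulli_inequality[of "-p" q] p1 by simp
  then have b1: "1/4 \<le> (1 - p) ^ q" using qp by simp
  have "(1/4) ^ 4 \<le> ((1 - p) ^ q) ^ 4" using b1 by (intro power_mono) auto
  also have "\<dots> = (1 - p) ^ (4*q)" by (simp add: power_mult[symmetric] mult.commute)
  also have "\<dots> \<le> (1 - p) ^ (4*q - 1)" using p0 p1 by (intro power_decreasing) auto
  finally have b2: "1/256 \<le> (1 - p) ^ (4*q - 1)" by (simp add: power_divide)
  have "1/512 \<le> real (4*q) * p * (1 - p) ^ (4*q - 1)"
  proof -
    have "1/2 * (1/256) \<le> real (4*q) * p * (1 - p) ^ (4*q - 1)"
      using lo b2 p0 p1 unfolding p_def[symmetric] by (intro mult_mono) auto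
    then show ?thesis by simp
  qed
  then have le: "B ^ (4*q) * (1/512) \<le> B ^ (4*q) * (real (4*q) * p * (1 - p) ^ (4*q - 1))"
    using B by (intro mult_left_mono) auto
  have e1: "B ^ (4*q) = B * B ^ (4*q - 1)"
  proof -
    have "4*q = Suc (4*q - 1)" using q by simp
    then show ?thesis by (metis power_Suc)
  qed
  have e2: "real (4*q) * A * (B - A) ^ (4*q - 1) = (B * B ^ (4*q - 1)) * (real (4*q) * p * (1 - p) ^ (4*q - 1))"
    unfolding BA unfolding Ap power_mult_distrib by (simp only: mult_ac)
  have "B ^ (4*q) / 512 = B ^ (4*q) * (1/512)" by simp
  also have "\<dots> \<le> B ^ (4*q) * (real (4*q) * p * (1 - p) ^ (4*q - 1))" by (rule le)
  also have "\<dots> = (B * B ^ (4*q - 1)) * (real (4*q) * p * (1 - p) ^ (4*q - 1))" by (simp only: e1)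
  also have "\<dots> = real (4*q) * A * (B - A) ^ (4*q - 1)" by (rule e2[symmetric])
  finally show ?thesis .
qed



lemma card_bij_filter:
  assumes "bij_betw f A B"
  shows "card {x\<in>A. Q (f x)} = card {y\<in>B. Q y}"
proof -
  have "inj_on f {x\<in>A. Q (f x)}" using assms by (auto simp: bij_betw_def inj_on_def)
  moreover have "f ` {x\<in>A. Q (f x)} = {y\<in>B. Q y}" using assms by (auto simp: bij_betw_def)
  ultimately show ?thesis using card_image by fastforce
qed

lemma cube_bij: "bij_betw (\<lambda>x. {j\<in>{0..<n}. x j}) (cube n) (Pow {0..<n})"
  unfolding bij_betw_def
proof
  show "inj_on (\<lambda>x. {j\<in>{0..<n}. x j}) (cube n)"
  proof (rule inj_onI)
    fix x y assume x: "x \<in> cube n" and y: "y \<in> cube n"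
      and e: "{j\<in>{0..<n}. x j} = {j\<in>{0..<n}. y j}"
    have ex: "x \<in> extensional {0..<n}" "y \<in> extensional {0..<n}"
      using x y unfolding cube_def by (simp_all add: PiE_iff)
    show "x = y"
    proof (rule ext)
      fix j show "x j = y j"
      proof (cases "j < n")
        case True
        from e have "(j \<in> {j\<in>{0..<n}. x j}) = (j \<in> {j\<in>{0..<n}. y j})" by (rule arg_cong)
        then show ?thesis using True by simp
      next
        case False
        then have "j \<notin> {0..<n}" by simp
        then show ?thesis using extensional_arb[OF ex(1)] extensional_arb[OF ex(2)] by metis
      qed
    qed
  qed
  show "(\<lambda>x. {j\<in>{0..<n}. x j}) ` cube n = Pow {0..<n}"
  proof (intro equalityI subsetI)
    fix W assume "W \<in> (\<lambda>x. {j\<in>{0..<n}. x j}) ` cube n"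
    then show "W \<in> Pow {0..<n}" by auto
  next
    fix W assume W: "W \<in> Pow {0..<n}"
    have r: "restrict (\<lambda>j. j \<in> W) {0..<n} \<in> cube n" unfolding cube_def by simp
    have "W = {j\<in>{0..<n}. restrict (\<lambda>j. j \<in> W) {0..<n} j}" using W by auto
    then show "W \<in> (\<lambda>x. {j\<in>{0..<n}. x j}) ` cube n" using r by (rule image_eqI)
  qed
qed

lemma card_cube: "card (cube n) = 2 ^ n"
  unfolding cube_def by (simp add: card_PiE)

lemma card_subsets_card: "card (subsets_card n k) = n choose k"
  unfolding subsets_card_def using n_subsets[of "{0..<n}" k] by simp

lemma card_set_tuples: "card (set_tuples n k) = (n choose k) ^ n"
  unfolding set_tuples_def by (simp add: card_PiE card_subsets_card)

lemma finite_subsets_card: "finite (subsets_card n k)"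
  unfolding subsets_card_def by (rule finite_subset[of _ "Pow {0..<n}"]) auto

lemma finite_set_tuples: "finite (set_tuples n k)"
  unfolding set_tuples_def by (intro finite_PiE finite_subsets_card) simp

lemma finite_cube: "finite (cube n)"
  unfolding cube_def by (intro finite_PiE) auto

lemma count_T:
  "card {T\<in>set_tuples n k. N_T n T x = 1}
   = n * (card {j\<in>{0..<n}. x j} choose k) * ((n choose k) - (card {j\<in>{0..<n}. x j} choose k)) ^ (n - 1)"
proof -
  define W where "W = {j\<in>{0..<n}. x j}"
  define G where "G = {U\<in>subsets_card n k. \<forall>j\<in>U. x j}"
  have GW: "G = {U. U \<subseteq> W \<and> card U = k}"
    unfolding G_def W_def subsets_card_def by auto
  have cG: "card G = card W choose k" unfolding GW by (rule n_subsets) (simp add: W_def)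
  have GS: "G \<subseteq> subsets_card n k" unfolding G_def by auto
  have eq: "{T\<in>set_tuples n k. N_T n T x = 1} = {T \<in> {0..<n} \<rightarrow>\<^sub>E subsets_card n k. card {i\<in>{0..<n}. T i \<in> G} = 1}"
  proof -
    have "{i\<in>{0..<n}. \<forall>j\<in>T i. x j} = {i\<in>{0..<n}. T i \<in> G}" if "T \<in> {0..<n} \<rightarrow>\<^sub>E subsets_card n k" for T
      using that unfolding G_def by (auto simp: PiE_iff)
    then show ?thesis unfolding set_tuples_def N_T_def by auto
  qed
  note c1 = count_exactly_one[OF finite_atLeastLessThan[of 0 n] GS finite_subsets_card]
  show ?thesis unfolding eq c1 cG card_subsets_card by (simp add: W_def)
qed


theorem mainTheorem3:
  shows "\<exists>c::real. c > 0 \<and> (\<exists>n0::nat. \<forall>n k::nat. n = 2 ^ k \<and> n \<ge> n0 \<longrightarrow>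
           expected_prob_unique n k \<ge> c \<and>
           (\<exists>T \<in> set_tuples n k. prob_unique n T \<ge> c))"
proof -
  have main: "expected_prob_unique n k \<ge> 1/2048 \<and> (\<exists>T \<in> set_tuples n k. prob_unique n T \<ge> 1/2048)"
    if nk: "n = 2^k" "n \<ge> 1024" for n k :: nat
  proof -
    have k10: "10 \<le> k"
    proof (rule ccontr)
      assume "\<not> 10 \<le> k"
      then have "k \<le> 9" by simp
      then have "(2::nat)^k \<le> 2^9" by (rule power_increasing) simp
      then show False using nk by simp
    qed
    define m where "m = (2::nat)^(k-1)"
    have "k = Suc (k-1)" using k10 by simp
    then have "(2::nat)^k = 2 * 2^(k-1)" by (metis power_Suc)
    then have nm: "n = 2*m" using nk by (simp add: m_def)
    define q where "q = (2::nat)^(k-2)"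
    have "k = Suc (Suc (k-2))" using k10 by simp
    then have "(2::nat)^k = 2 * (2 * 2^(k-2))" by (metis power_Suc)
    then have nq: "n = 4*q" using nk by (simp add: q_def)
    have q1: "q \<ge> 1" unfolding q_def by simp
    have kn: "k \<le> n" using nk less_exp[of k] by simp
    define Bc where "Bc = n choose k"
    have Bpos: "0 < Bc" unfolding Bc_def using kn by simp
    define wx where "wx x = card {j\<in>{0..<n}. x j}" for x :: "nat \<Rightarrow> bool"
    define d where "d x = n * (wx x choose k) * (Bc - (wx x choose k)) ^ (n - 1)" for x
    have sumswap: "(\<Sum>T\<in>set_tuples n k. card {x\<in>cube n. N_T n T x = 1}) = (\<Sum>x\<in>cube n. d x)"
    proof -
      have "(\<Sum>T\<in>set_tuples n k. card {x\<in>cube n. N_T n T x = 1}) = (\<Sum>x\<in>cube n. card {T\<in>set_tuples n k. N_T n T x = 1})"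
        by (rule sum_card_swap[OF finite_set_tuples finite_cube])
      also have "\<dots> = (\<Sum>x\<in>cube n. d x)"
        by (rule sum.cong[OF refl]) (unfold d_def wx_def Bc_def, rule count_T)
      finally show ?thesis .
    qed
    have E: "expected_prob_unique n k = real (\<Sum>x\<in>cube n. d x) / 2 ^ n / real Bc ^ n"
    proof -
      have "(\<Sum>T\<in>set_tuples n k. prob_unique n T) = (\<Sum>T\<in>set_tuples n k. real (card {x\<in>cube n. N_T n T x = 1})) / 2 ^ n"
        unfolding prob_unique_def card_cube by (simp add: sum_divide_distrib)
      also have "\<dots> = real (\<Sum>x\<in>cube n. d x) / 2 ^ n"
        by (simp only: of_nat_sum[symmetric] sumswap)
      finally show ?thesis unfolding expected_prob_unique_def card_set_tuples Bc_def by simp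
    qed
    define P where "P w = (m \<le> w \<and> real w \<le> real m + real m / real k)" for w
    define R where "R = {x\<in>cube n. P (wx x)}"
    have wxn: "wx x \<le> n" for x unfolding wx_def
      by (rule order.trans[OF card_mono[of "{0..<n}"]]) auto
    have dR: "real Bc ^ n / 512 \<le> real (d x)" if xR: "x \<in> R" for x
    proof -
      define w where "w = wx x"
      have Pw: "m \<le> w" "real w \<le> real m + real m / real k" using xR unfolding R_def P_def w_def by auto
      have pb: "1/2 \<le> real (2^k) * (real (w choose k) / real (2^k choose k))"
               "real (2^k) * (real (w choose k) / real (2^k choose k)) \<le> 3"
        using p_bounds[OF k10, of w] Pw unfolding m_def by auto
      have AB: "w choose k \<le> Bc" unfolding Bc_def using wxn[of x] by (simp add: w_def binomial_right_mono)
      have fb: "real Bc ^ (4*q) / 512 \<le> real (4*q) * real (w choose k) * (real Bc - real (w choose k)) ^ (4*q - 1)"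
      proof -
        have n4: "(2::nat)^k = 4*q" using nk nq by simp
        have BcE: "Bc = 4*q choose k" by (simp add: Bc_def nq)
        have pb': "1/2 \<le> real (4*q) * (real (w choose k) / real Bc)"
                  "real (4*q) * (real (w choose k) / real Bc) \<le> 3"
          using pb unfolding n4 BcE[symmetric] by auto
        show ?thesis by (rule f_bound[OF _ _ _ q1 pb'(1) pb'(2)]) (use Bpos AB in auto)
      qed
      have "real (d x) = real (4*q) * real (w choose k) * (real Bc - real (w choose k)) ^ (4*q - 1)"
        unfolding d_def w_def[symmetric] using AB nq by (simp add: of_nat_diff)
      then show ?thesis using fb nq by simp
    qed
    have cardR: "2 ^ n / 4 \<le> real (card R)"
    proof -
      have "card R = card {W\<in>Pow {0..<n}. P (card W)}"
        unfolding R_def wx_def by (rule card_bij_filter[OF cube_bij])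
      also have "{W\<in>Pow {0..<n}. P (card W)} = {W. W \<subseteq> {0..<n} \<and> P (card W)}" by auto
      also have "card \<dots> = (\<Sum>w\<in>{w. w \<le> n \<and> P w}. n choose w)"
        using card_subsets_pred[of "{0..<n}" P] by simp
      finally have cR: "real (card R) = (\<Sum>w\<in>{w. w \<le> n \<and> P w}. real (n choose w))" by simp
      define t where "t = real m / real k"
      have mpos: "real m > 0" unfolding m_def by simp
      have kpos: "real k > 0" using k10 by simp
      have tpos: "t > 0" unfolding t_def using mpos kpos by simp
      define U where "U = {m..2*m}"
      define Tl where "Tl = {i. real m + t \<le> real i \<and> i \<le> 2*m}"
      define Ps where "Ps = {w. w \<le> n \<and> P w}"
      have fin: "finite Ps" "finite Tl" unfolding Ps_def Tl_def by auto
      have sub: "U \<subseteq> Ps \<union> Tl" unfolding U_def Ps_def Tl_def P_def t_def using nm by auto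
      have "(\<Sum>w\<in>U. real (n choose w)) \<le> (\<Sum>w\<in>Ps \<union> Tl. real (n choose w))"
        by (rule sum_mono2) (use fin sub in auto)
      also have "\<dots> \<le> (\<Sum>w\<in>Ps. real (n choose w)) + (\<Sum>w\<in>Tl. real (n choose w))"
      proof -
        have "(\<Sum>w\<in>Ps \<union> Tl. real (n choose w)) = (\<Sum>w\<in>Ps. real (n choose w)) + (\<Sum>w\<in>Tl. real (n choose w)) - (\<Sum>w\<in>Ps \<inter> Tl. real (n choose w))"
          by (rule sum_Un) (use fin in auto)
        moreover have "0 \<le> (\<Sum>w\<in>Ps \<inter> Tl. real (n choose w))" by (rule sum_nonneg) simp
        ultimately show ?thesis by linarith
      qed
      finally have s1: "(\<Sum>w\<in>U. real (n choose w)) \<le> (\<Sum>w\<in>Ps. real (n choose w)) + (\<Sum>w\<in>Tl. real (n choose w))" .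
      have s2: "2 ^ n \<le> 2 * (\<Sum>w\<in>U. real (n choose w))" unfolding U_def nm by (rule upper_half)
      have s3: "(\<Sum>w\<in>Tl. real (n choose w)) * t ^ 2 \<le> real m * 2 ^ n / 2"
        unfolding Tl_def nm by (rule tail_bound[OF tpos])
      have kk: "4 * real k ^ 2 \<le> 2 * real m"
      proof -
        have "4 * k^2 \<le> 2 * m" using four_sq_le_pow[OF k10] nm nk by simp
        then have "real (4 * k^2) \<le> real (2 * m)" by (simp only: of_nat_le_iff)
        then show ?thesis by simp
      qed
      have s4: "(\<Sum>w\<in>Tl. real (n choose w)) \<le> 2 ^ n / 4"
      proof -
        define S where "S = (\<Sum>w\<in>Tl. real (n choose w))"
        define X :: real where "X = 2 ^ n"
        have S0: "0 \<le> S" unfolding S_def by (rule sum_nonneg) simp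
        have "S * (real m / real k) ^ 2 \<le> real m * X / 2" using s3 unfolding S_def X_def t_def .
        then have "S * real m ^ 2 \<le> real m * X / 2 * real k ^ 2"
          using kpos by (simp add: power_divide field_simps)
        then have "S * real m * real m \<le> (X * real k ^ 2 / 2) * real m"
          by (simp add: power2_eq_square algebra_simps)
        then have a: "S * real m \<le> X * real k ^ 2 / 2" using mpos
          by (metis mult_le_cancel_right_pos)
        have "X * real k ^ 2 / 2 \<le> X * (real m / 2) / 2"
          using kk unfolding X_def by (intro divide_right_mono mult_left_mono) auto
        then have "S * real m \<le> (X / 4) * real m" using a by (simp add: algebra_simps)
        then have "S \<le> X / 4" using mpos by (metis mult_le_cancel_right_pos)
        then show ?thesis unfolding S_def X_def .
      qed
      have "2 ^ n / 4 \<le> (\<Sum>w\<in>Ps. real (n choose w))" using s1 s2 s4 by linarith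
      then show ?thesis using cR unfolding Ps_def by simp
    qed
    have RC: "R \<subseteq> cube n" unfolding R_def by auto
    have "real (card R) * (real Bc ^ n / 512) = (\<Sum>x\<in>R. real Bc ^ n / 512)" by simp
    also have "\<dots> \<le> (\<Sum>x\<in>R. real (d x))" by (rule sum_mono) (rule dR)
    also have "\<dots> \<le> (\<Sum>x\<in>cube n. real (d x))" by (rule sum_mono2[OF finite_cube RC]) simp
    also have "\<dots> = real (\<Sum>x\<in>cube n. d x)" by simp
    finally have lb: "real (card R) * (real Bc ^ n / 512) \<le> real (\<Sum>x\<in>cube n. d x)" .
    have Bn: "real Bc ^ n > 0" using Bpos by simp
    have "2 ^ n / 4 * (real Bc ^ n / 512) \<le> real (card R) * (real Bc ^ n / 512)"
      using cardR Bn by (intro mult_right_mono) auto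
    with lb have lb2: "2 ^ n / 4 * (real Bc ^ n / 512) \<le> real (\<Sum>x\<in>cube n. d x)" by linarith
    have "1/2048 = 2 ^ n / 4 * (real Bc ^ n / 512) / 2 ^ n / real Bc ^ n"
      using Bn by (simp add: field_simps)
    also have "\<dots> \<le> real (\<Sum>x\<in>cube n. d x) / 2 ^ n / real Bc ^ n"
      using lb2 Bn by (intro divide_right_mono) auto
    finally have Eb: "1/2048 \<le> expected_prob_unique n k" unfolding E .
    have ex: "\<exists>T \<in> set_tuples n k. prob_unique n T \<ge> 1/2048"
    proof (rule ccontr)
      assume "\<not> ?thesis"
      then have lt: "\<forall>T\<in>set_tuples n k. prob_unique n T < 1/2048" by auto
      have ne: "set_tuples n k \<noteq> {}"
      proof -
        have "{0..<k} \<in> subsets_card n k" unfolding subsets_card_def using kn by auto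
        then have "(\<lambda>i\<in>{0..<n}. {0..<k}) \<in> set_tuples n k" unfolding set_tuples_def by auto
        then show ?thesis by auto
      qed
      have "(\<Sum>T\<in>set_tuples n k. prob_unique n T) < (\<Sum>T\<in>set_tuples n k. 1/2048)"
        by (rule sum_strict_mono[OF finite_set_tuples ne]) (use lt in auto)
      then have "(\<Sum>T\<in>set_tuples n k. prob_unique n T) < real (card (set_tuples n k)) / 2048" by simp
      moreover have "real (card (set_tuples n k)) > 0" using ne finite_set_tuples by (simp add: card_gt_0_iff)
      ultimately have "expected_prob_unique n k < 1/2048"
        unfolding expected_prob_unique_def by (simp add: field_simps)
      then show False using Eb by simp
    qed
    show ?thesis using Eb ex by simp
  qed
  show ?thesis
  proof (intro exI[of _ "1/2048"] conjI)
    show "(0::real) < 1/2048" by simp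
    show "\<exists>n0::nat. \<forall>n k::nat. n = 2 ^ k \<and> n \<ge> n0 \<longrightarrow>
           expected_prob_unique n k \<ge> 1/2048 \<and> (\<exists>T \<in> set_tuples n k. prob_unique n T \<ge> 1/2048)"
    proof (intro exI[of _ "1024::nat"] allI impI)
      fix n k :: nat assume "n = 2 ^ k \<and> n \<ge> 1024"
      then show "expected_prob_unique n k \<ge> 1/2048 \<and> (\<exists>T \<in> set_tuples n k. prob_unique n T \<ge> 1/2048)"
        using main by blast
    qed
  qed
qed

end
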